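(* Let $\alpha\in(0,1)$, $\tau>0$, $t_m=m\tau$, and let $v=(v^0,v^1,v^2,\dots)$ be any sequence of real numbers. Define $$a_0^{(\alpha)}=\frac{1}{\Gamma(2-\alpha)},\qquad a_k^{(\alpha)}=\frac{1}{\Gamma(2-\alpha)}\big[(k+1)^{1-\alpha}-k^{1-\alpha}\big],\ k\ge1,$$ and, for $n\ge1$, $$\delta_t^{\alpha}v^n=\frac{1}{\tau^{\alpha}}\Big[a_0^{(\alpha)}v^n-\sum_{k=1}^{n-1}\big(a_{n-k-1}^{(\alpha)}-a_{n-k}^{(\alpha)}\big)v^k-a_{n-1}^{(\alpha)}v^0\Big].$$ Then for every integer $m\ge1$, $$\tau\sum_{n=1}^{m}v^n\,\delta_t^{\alpha}v^n\ \ge\ \frac12\,\tau^{1-\alpha}\sum_{n=1}^{m}a_{m-n}^{(\alpha)}(v^n)^2-\frac{t_m^{1-\alpha}}{2\Gamma(2-\alpha)}(v^0)^2 .$$ *)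

theory Defs
  imports "HOL-Analysis.Analysis"
begin

definition L1_coef :: "real \<Rightarrow> nat \<Rightarrow> real" where
  "L1_coef \<alpha> k = (if k = 0 then 1 / Gamma (2 - \<alpha>)
     else (1 / Gamma (2 - \<alpha>)) * ((real k + 1) powr (1 - \<alpha>) - (real k) powr (1 - \<alpha>)))"

definition L1_caputo :: "real \<Rightarrow> real \<Rightarrow> (nat \<Rightarrow> real) \<Rightarrow> nat \<Rightarrow> real" where
  "L1_caputo \<alpha> \<tau> v n = (1 / \<tau> powr \<alpha>) *
     (L1_coef \<alpha> 0 * v n
      - (\<Sum>k = 1..n - 1. (L1_coef \<alpha> (n - k - 1) - L1_coef \<alpha> (n - k)) * v k)
      - L1_coef \<alpha> (n - 1) * v 0)"

end

theory Submission
  imports Defs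
begin

lemma tele_aux:
  fixes a :: "nat \<Rightarrow> real"
  shows "(\<Sum>k=1..j. (a (j-k) - a (Suc j - k))) = a 0 - a j"
proof -
  have "(\<Sum>k=1..j. (a (j-k) - a (Suc j - k))) = (\<Sum>i<j. (a i - a (Suc i)))"
    by (rule sum.reindex_bij_witness[of _ "\<lambda>i. j - i" "\<lambda>k. j - k"])
       (auto simp: Suc_diff_le)
  also have "\<dots> = a 0 - a j" by (rule sum_lessThan_telescope')
  finally show ?thesis .
qed

lemma step_aux:
  fixes a v :: "nat \<Rightarrow> real"
  assumes mono: "\<And>k. a (Suc k) \<le> a k" and nn: "\<And>k. 0 \<le> a k"
  shows "v (Suc j) * (a 0 * v (Suc j) - (\<Sum>k=1..j. (a (j-k) - a (Suc j - k)) * v k) - a j * v 0)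
     \<ge> 1/2 * ((\<Sum>k=1..Suc j. a (Suc j - k) * (v k)^2) - (\<Sum>k=1..j. a (j-k) * (v k)^2) - a j * (v 0)^2)"
proof -
  define x where "x = v (Suc j)"
  define c where "c k = a (j-k) - a (Suc j - k)" for k
  have cnn: "c k \<ge> 0" if "k \<le> j" for k
    using mono[of "j-k"] that by (simp add: c_def Suc_diff_le)
  have b1: "c k * v k * x \<le> c k * ((v k)^2 + x^2) / 2" if "k \<in> {1..j}" for k
  proof -
    have "v k * x \<le> ((v k)^2 + x^2) / 2"
      using sum_squares_ge_zero[of "v k - x" 0] by (simp add: power2_eq_square algebra_simps)
    then show ?thesis using cnn[of k] that
      by (metis atLeastAtMost_iff mult.assoc mult_left_mono times_divide_eq_right)
  qed
  have s1: "(\<Sum>k=1..j. c k * v k * x) \<le> (\<Sum>k=1..j. c k * ((v k)^2 + x^2) / 2)"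
    by (rule sum_mono) (use b1 in auto)
  have s2: "(\<Sum>k=1..j. c k * ((v k)^2 + x^2) / 2) = (\<Sum>k=1..j. c k * (v k)^2)/2 + x^2 * (a 0 - a j) / 2"
  proof -
    have "(\<Sum>k=1..j. c k * ((v k)^2 + x^2) / 2) = (\<Sum>k=1..j. c k * (v k)^2)/2 + x^2 * (\<Sum>k=1..j. c k) / 2"
    proof -
      have "(\<Sum>k=1..j. c k * ((v k)^2 + x^2) / 2) = (\<Sum>k=1..j. c k * (v k)^2 / 2 + x^2 * (c k / 2))"
        by (rule sum.cong) (simp_all add: algebra_simps add_divide_distrib)
      also have "\<dots> = (\<Sum>k=1..j. c k * (v k)^2)/2 + x^2 * (\<Sum>k=1..j. c k) / 2"
        by (simp add: sum.distrib sum_divide_distrib sum_distrib_left)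
      finally show ?thesis .
    qed
    then show ?thesis using tele_aux[of a j] by (simp add: c_def)
  qed
  have b2: "a j * v 0 * x \<le> a j * ((v 0)^2 + x^2) / 2"
  proof -
    have "v 0 * x \<le> ((v 0)^2 + x^2) / 2"
      using sum_squares_ge_zero[of "v 0 - x" 0] by (simp add: power2_eq_square algebra_simps)
    then show ?thesis using nn[of j]
      by (metis mult.assoc mult_left_mono times_divide_eq_right)
  qed
  have e1: "(\<Sum>k=1..Suc j. a (Suc j - k) * (v k)^2) = a 0 * x^2 + (\<Sum>k=1..j. a (Suc j - k) * (v k)^2)"
    by (simp add: x_def)
  have e2: "(\<Sum>k=1..j. a (Suc j - k) * (v k)^2) - (\<Sum>k=1..j. a (j-k) * (v k)^2) = - (\<Sum>k=1..j. c k * (v k)^2)"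
    unfolding sum_subtractf[symmetric] sum_negf[symmetric] by (rule sum.cong) (auto simp: c_def algebra_simps)
  have lhs: "v (Suc j) * (a 0 * v (Suc j) - (\<Sum>k=1..j. (a (j-k) - a (Suc j - k)) * v k) - a j * v 0)
     = a 0 * x^2 - (\<Sum>k=1..j. c k * v k * x) - a j * v 0 * x"
    by (simp add: x_def c_def sum_distrib_left sum_distrib_right power2_eq_square algebra_simps)
  have b2': "a j * v 0 * x \<le> a j * (v 0)^2 / 2 + a j * x^2 / 2" using b2 by (simp add: algebra_simps add_divide_distrib)
  have s2': "(\<Sum>k=1..j. c k * ((v k)^2 + x^2) / 2) = (\<Sum>k=1..j. c k * (v k)^2)/2 + a 0 * x^2 / 2 - a j * x^2 / 2"
    using s2 by (simp add: algebra_simps diff_divide_distrib)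
  have g1: "a 0 * x^2 - (\<Sum>k=1..j. c k * v k * x) - a j * v 0 * x \<ge> a 0 * x^2 / 2 - (\<Sum>k=1..j. c k * (v k)^2)/2 - a j * (v 0)^2 / 2"
    using s1 s2' b2' by linarith
  have g2: "1/2 * ((\<Sum>k=1..Suc j. a (Suc j - k) * (v k)^2) - (\<Sum>k=1..j. a (j-k) * (v k)^2) - a j * (v 0)^2) = a 0 * x^2 / 2 - (\<Sum>k=1..j. c k * (v k)^2)/2 - a j * (v 0)^2 / 2"
  proof -
    have "(\<Sum>k=1..Suc j. a (Suc j - k) * (v k)^2) - (\<Sum>k=1..j. a (j-k) * (v k)^2) = a 0 * x^2 - (\<Sum>k=1..j. c k * (v k)^2)"
      using e1 e2 by linarith
    then show ?thesis by (simp add: algebra_simps)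
  qed
  show ?thesis unfolding lhs using g1 g2 by linarith
qed

lemma sum_aux:
  fixes a v :: "nat \<Rightarrow> real"
  assumes mono: "\<And>k. a (Suc k) \<le> a k" and nn: "\<And>k. 0 \<le> a k"
  shows "(\<Sum>n=1..m. v n * (a 0 * v n - (\<Sum>k = 1..n - 1. (a (n - k - 1) - a (n - k)) * v k) - a (n - 1) * v 0))
     \<ge> 1/2 * (\<Sum>n=1..m. a (m - n) * (v n)^2) - 1/2 * (\<Sum>n<m. a n) * (v 0)^2"
proof (induction m)
  case 0
  then show ?case by simp
next
  case (Suc m)
  have st: "v (Suc m) * (a 0 * v (Suc m) - (\<Sum>k=1..m. (a (m-k) - a (Suc m - k)) * v k) - a m * v 0)
     \<ge> 1/2 * ((\<Sum>k=1..Suc m. a (Suc m - k) * (v k)^2) - (\<Sum>k=1..m. a (m-k) * (v k)^2) - a m * (v 0)^2)"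
    by (rule step_aux[of a, OF mono nn])
  have eq: "(\<Sum>k = 1..Suc m - 1. (a (Suc m - k - 1) - a (Suc m - k)) * v k)
      = (\<Sum>k=1..m. (a (m-k) - a (Suc m - k)) * v k)"
    by simp
  show ?case using Suc.IH st eq by (simp add: algebra_simps)
qed

lemma coef_formula:
  assumes "0 < \<alpha>" "\<alpha> < 1"
  shows "L1_coef \<alpha> k = (1 / Gamma (2 - \<alpha>)) * ((real k + 1) powr (1 - \<alpha>) - (real k) powr (1 - \<alpha>))"
  using assms by (simp add: L1_coef_def)

lemma coef_nn:
  assumes "0 < \<alpha>" "\<alpha> < 1"
  shows "0 \<le> L1_coef \<alpha> k"
proof -
  have "Gamma (2 - \<alpha>) > 0" using assms by (intro Gamma_real_pos) simp
  moreover have "(real k) powr (1 - \<alpha>) \<le> (real k + 1) powr (1 - \<alpha>)"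
    using assms by (intro powr_mono2) auto
  ultimately show ?thesis by (simp add: coef_formula[OF assms])
qed

lemma coef_mono:
  assumes "0 < \<alpha>" "\<alpha> < 1"
  shows "L1_coef \<alpha> (Suc k) \<le> L1_coef \<alpha> k"
proof -
  define b where "b = 1 - \<alpha>"
  have b: "0 < b" "b < 1" using assms by (auto simp: b_def)
  have G: "Gamma (2 - \<alpha>) > 0" using assms by (intro Gamma_real_pos) simp
  have key: "(real k + 2) powr b - (real k + 1) powr b \<le> (real k + 1) powr b - (real k) powr b"
  proof (cases "k = 0")
    case True
    have "2 powr b \<le> (2::real) powr 1" using b by (intro powr_mono) auto
    then show ?thesis using True by simp
  next
    case False
    define f where "f x = (x + 1) powr b - x powr b" for x :: real
    have "f (real k + 1) \<le> f (real k)"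
    proof (rule DERIV_nonpos_imp_nonincreasing[of "real k" "real k + 1" f])
      show "real k \<le> real k + 1" by simp
    next
      fix x assume x: "real k \<le> x" "x \<le> real k + 1"
      have xp: "x > 0" using False x by linarith
      have "DERIV f x :> b * (x + 1) powr (b - 1) - b * x powr (b - 1)"
        unfolding f_def using xp
        by (auto intro!: derivative_eq_intros)
      moreover have "(x + 1) powr (b - 1) \<le> x powr (b - 1)"
        using xp b by (intro less_imp_le[OF powr_less_mono2_neg]) auto
      moreover have "b * (x + 1) powr (b - 1) \<le> b * x powr (b - 1)"
        using b calculation(2) by (intro mult_left_mono) auto
      ultimately show "\<exists>y. DERIV f x :> y \<and> y \<le> 0"
        by (intro exI[of _ "b * (x + 1) powr (b - 1) - b * x powr (b - 1)"]) auto
    qed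
    then show ?thesis by (simp add: f_def add.assoc)
  qed
  have "L1_coef \<alpha> (Suc k) = (1 / Gamma (2 - \<alpha>)) * ((real k + 2) powr b - (real k + 1) powr b)"
    by (simp add: coef_formula[OF assms] b_def add.assoc add.commute)
  moreover have "L1_coef \<alpha> k = (1 / Gamma (2 - \<alpha>)) * ((real k + 1) powr b - (real k) powr b)"
    by (simp add: coef_formula[OF assms] b_def)
  ultimately show ?thesis using key G by (simp add: divide_right_mono)
qed

lemma coef_sum:
  assumes "0 < \<alpha>" "\<alpha> < 1"
  shows "(\<Sum>n<m. L1_coef \<alpha> n) = (real m) powr (1 - \<alpha>) / Gamma (2 - \<alpha>)"
proof -
  have "(\<Sum>n<m. L1_coef \<alpha> n) = (\<Sum>n<m. (1 / Gamma (2 - \<alpha>)) * ((real (Suc n)) powr (1 - \<alpha>) - (real n) powr (1 - \<alpha>)))"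
    by (simp add: coef_formula[OF assms] add.commute)
  also have "\<dots> = (1 / Gamma (2 - \<alpha>)) * (\<Sum>n<m. (real (Suc n)) powr (1 - \<alpha>) - (real n) powr (1 - \<alpha>))"
    by (simp add: sum_distrib_left)
  also have "\<dots> = (1 / Gamma (2 - \<alpha>)) * ((real m) powr (1 - \<alpha>) - (real 0) powr (1 - \<alpha>))"
    by (subst sum_lessThan_telescope[where f = "\<lambda>n. (real n) powr (1 - \<alpha>)"]) simp
  finally show ?thesis by simp
qed

theorem lemma7:
  fixes \<alpha> \<tau> :: real and v :: "nat \<Rightarrow> real" and m :: nat
  assumes "0 < \<alpha>" "\<alpha> < 1" "0 < \<tau>" "1 \<le> m"
  shows "\<tau> * (\<Sum>n = 1..m. v n * L1_caputo \<alpha> \<tau> v n)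
     \<ge> (1/2) * \<tau> powr (1 - \<alpha>) * (\<Sum>n = 1..m. L1_coef \<alpha> (m - n) * (v n)^2)
       - (real m * \<tau>) powr (1 - \<alpha>) / (2 * Gamma (2 - \<alpha>)) * (v 0)^2"
proof -
  let ?a = "L1_coef \<alpha>"
  let ?S = "(\<Sum>n=1..m. v n * (?a 0 * v n - (\<Sum>k = 1..n - 1. (?a (n - k - 1) - ?a (n - k)) * v k) - ?a (n - 1) * v 0))"
  have tp: "\<tau> powr (1 - \<alpha>) = \<tau> / \<tau> powr \<alpha>"
    using assms(3) by (simp add: powr_diff)
  have L: "\<tau> * (\<Sum>n = 1..m. v n * L1_caputo \<alpha> \<tau> v n) = \<tau> powr (1 - \<alpha>) * ?S"
    unfolding tp by (simp add: L1_caputo_def sum_distrib_left algebra_simps)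
  have S: "?S \<ge> 1/2 * (\<Sum>n=1..m. ?a (m - n) * (v n)^2) - 1/2 * ((real m) powr (1 - \<alpha>) / Gamma (2 - \<alpha>)) * (v 0)^2"
    using sum_aux[of ?a m v, OF coef_mono[OF assms(1,2)] coef_nn[OF assms(1,2)]]
    by (simp add: coef_sum[OF assms(1,2)])
  have tpos: "\<tau> powr (1 - \<alpha>) > 0" using assms(3) by simp
  have "\<tau> powr (1 - \<alpha>) * ?S \<ge> \<tau> powr (1 - \<alpha>) * (1/2 * (\<Sum>n=1..m. ?a (m - n) * (v n)^2) - 1/2 * ((real m) powr (1 - \<alpha>) / Gamma (2 - \<alpha>)) * (v 0)^2)"
    using S tpos by (intro mult_left_mono) auto
  moreover have "(real m * \<tau>) powr (1 - \<alpha>) = (real m) powr (1 - \<alpha>) * \<tau> powr (1 - \<alpha>)"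
    using assms(3) by (simp add: powr_mult)
  ultimately show ?thesis unfolding L by (simp add: algebra_simps)
qed

end
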